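(* For any $1\le\beta\le m$ and any $x\in\mathbb{R}^n$, $\mathbb{E}_{\mathbb{S}}[a_{i^*}a_{i^*}^T]\preceq\frac{\beta}{m}A^TA$ (in the positive semidefinite order).
   Context: $A\in\mathbb{R}^{m\times n}$ has rows $a_1^T,\dots,a_m^T$ with $\|a_i\|_2=1$, and $b\in\mathbb{R}^m$; $t^+=\max\{t,0\}$. Sampling distribution $\mathbb{S}$ at $x$ (with sample size $\beta$): choose $\tau\subseteq\{1,\dots,m\}$ with $|\tau|=\beta$ uniformly at random among all $\binom m\beta$ subsets and let $i^*\in\tau$ be an index maximizing $(a_i^Tx-b_i)^+$ over $i\in\tau$; $\mathbb{E}_{\mathbb{S}}$ is expectation over $\tau$. *)

theory Defs
  imports "HOL-Analysis.Analysis"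
begin

text \<open>Rows of A :: real^'n^'m are A $ i (i :: 'm); m = CARD('m), n = CARD('n).\<close>

definition pos_part :: "real \<Rightarrow> real" where
  "pos_part t = max t 0"

definition outer_prod :: "real^'n \<Rightarrow> real^'n^'n" where
  "outer_prod u = (\<chi> i j. u $ i * u $ j)"

definition psd_le :: "real^'n^'n \<Rightarrow> real^'n^'n \<Rightarrow> bool" where
  "psd_le P Q \<longleftrightarrow> (\<forall>v. 0 \<le> v \<bullet> ((Q - P) *v v))"

text \<open>Expectation over tau chosen uniformly among all subsets of the row indices of size beta.\<close>
definition subset_expectation :: "nat \<Rightarrow> ('m::finite set \<Rightarrow> 'b::real_vector) \<Rightarrow> 'b" where
  "subset_expectation \<beta> f =
     (1 / real (CARD('m) choose \<beta>)) *\<^sub>R (\<Sum>\<tau>\<in>{\<tau>::'m set. card \<tau> = \<beta>}. f \<tau>)"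

end

theory Submission
  imports Defs
begin

lemma quad_outer: "v \<bullet> (outer_prod u *v v) = (u \<bullet> v)^2"
proof -
  have "v \<bullet> (outer_prod u *v v) = (\<Sum>i\<in>UNIV. v$i * (\<Sum>j\<in>UNIV. u$i * u$j * v$j))"
    by (simp add: outer_prod_def inner_vec_def matrix_vector_mult_def)
  also have "\<dots> = (\<Sum>i\<in>UNIV. u$i * v$i) * (\<Sum>j\<in>UNIV. u$j * v$j)"
    by (simp add: sum_distrib_left sum_distrib_right mult_ac)
  finally show ?thesis by (simp add: inner_vec_def power2_eq_square)
qed

lemma tr: fixes A :: "real^'n^'m" shows "v \<bullet> (transpose A *v w) = (\<Sum>i\<in>UNIV. w$i * ((A$i) \<bullet> v))"
  apply (simp add: inner_vec_def matrix_vector_mult_def transpose_def sum_distrib_left sum_distrib_right)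
  apply (subst sum.swap) apply (simp add: mult_ac)
  done
lemma quad_ata: fixes A :: "real^'n^'m" shows "v \<bullet> ((transpose A ** A) *v v) = (\<Sum>i\<in>UNIV. ((A$i) \<bullet> v)^2)"
proof -
  have "v \<bullet> ((transpose A ** A) *v v) = v \<bullet> (transpose A *v (A *v v))"
    by (simp add: matrix_vector_mul_assoc)
  also have "\<dots> = (\<Sum>i\<in>UNIV. (A *v v)$i * ((A$i) \<bullet> v))" by (rule tr)
  also have "\<dots> = (\<Sum>i\<in>UNIV. ((A$i) \<bullet> v)^2)"
    by (simp add: inner_vec_def matrix_vector_mult_def power2_eq_square)
  finally show ?thesis .
qed

lemma quad_lin:
  fixes P Q :: "real^'n^'n"
  shows "v \<bullet> ((Q - P) *v v) = v \<bullet> (Q *v v) - v \<bullet> (P *v v)"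
    and "v \<bullet> ((c *\<^sub>R Q) *v v) = c * (v \<bullet> (Q *v v))"
    and "finite S \<Longrightarrow> v \<bullet> ((\<Sum>s\<in>S. F s) *v v) = (\<Sum>s\<in>S. v \<bullet> (F s *v v))"
proof -
  show "v \<bullet> ((Q - P) *v v) = v \<bullet> (Q *v v) - v \<bullet> (P *v v)"
    by (simp add: matrix_vector_mult_diff_rdistrib inner_diff_right)
  show "v \<bullet> ((c *\<^sub>R Q) *v v) = c * (v \<bullet> (Q *v v))"
    by (simp add: matrix_vector_mult_def inner_vec_def sum_distrib_left algebra_simps)
  show "finite S \<Longrightarrow> v \<bullet> ((\<Sum>s\<in>S. F s) *v v) = (\<Sum>s\<in>S. v \<bullet> (F s *v v))"
    by (induction S rule: finite_induct) (auto simp: matrix_vector_mult_add_rdistrib inner_add_right)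
qed

lemma count_containing:
  assumes "1 \<le> k"
  shows "card {\<tau>::'m::finite set. card \<tau> = k \<and> i \<in> \<tau>} = (CARD('m) - 1) choose (k - 1)"
proof -
  have "bij_betw (\<lambda>\<tau>. \<tau> - {i}) {\<tau>::'m set. card \<tau> = k \<and> i \<in> \<tau>} {B. B \<subseteq> UNIV - {i} \<and> card B = k - 1}"
  proof (rule bij_betw_byWitness[where f'="insert i"])
    show "\<forall>a\<in>{\<tau>::'m set. card \<tau> = k \<and> i \<in> \<tau>}. insert i (a - {i}) = a" by auto
    show "\<forall>a'\<in>{B. B \<subseteq> UNIV - {i} \<and> card B = k - 1}. insert i a' - {i} = a'" by auto
    show "(\<lambda>\<tau>. \<tau> - {i}) ` {\<tau>::'m set. card \<tau> = k \<and> i \<in> \<tau>} \<subseteq> {B. B \<subseteq> UNIV - {i} \<and> card B = k - 1}"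
      by auto
    show "insert i ` {B. B \<subseteq> UNIV - {i} \<and> card B = k - 1} \<subseteq> {\<tau>::'m set. card \<tau> = k \<and> i \<in> \<tau>}"
      using assms by (auto simp: card_insert_if)
  qed
  hence "card {\<tau>::'m set. card \<tau> = k \<and> i \<in> \<tau>} = card {B. B \<subseteq> UNIV - {i} \<and> card B = k - 1}"
    by (rule bij_betw_same_card)
  also have "\<dots> = card (UNIV - {i::'m}) choose (k - 1)" by (rule n_subsets) simp
  also have "card (UNIV - {i::'m}) = CARD('m) - 1" by (simp add: card_Diff_singleton)
  finally show ?thesis .
qed

theorem lemma5:
  fixes A :: "real^'n^'m" and b :: "real^'m" and x :: "real^'n"
    and \<beta> :: nat and istar :: "'m set \<Rightarrow> 'm"
  assumes unit_rows: "\<forall>i. norm (A $ i) = 1"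
    and beta_ge: "1 \<le> \<beta>" and beta_le: "\<beta> \<le> CARD('m)"
    and istar: "\<forall>\<tau>::'m set. card \<tau> = \<beta> \<longrightarrow>
        istar \<tau> \<in> \<tau> \<and>
        (\<forall>i\<in>\<tau>. pos_part ((A $ i) \<bullet> x - b $ i) \<le> pos_part ((A $ istar \<tau>) \<bullet> x - b $ istar \<tau>))"
  shows "psd_le (subset_expectation \<beta> (\<lambda>\<tau>. outer_prod (A $ istar \<tau>)))
                ((real \<beta> / real CARD('m)) *\<^sub>R (transpose A ** A))"
  unfolding psd_le_def
proof
  fix v :: "real^'n"
  let ?T = "{\<tau>::'m set. card \<tau> = \<beta>}"
  let ?g = "\<lambda>i. ((A$i) \<bullet> v)^2"
  let ?C = "real (CARD('m) choose \<beta>)"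
  have fin: "finite ?T" by simp
  have Cpos: "?C > 0" using beta_le by simp
  have L: "v \<bullet> (subset_expectation \<beta> (\<lambda>\<tau>. outer_prod (A $ istar \<tau>)) *v v)
      = (1 / ?C) * (\<Sum>\<tau>\<in>?T. ?g (istar \<tau>))"
    unfolding subset_expectation_def quad_lin(2) quad_lin(3)[OF fin] quad_outer by simp
  have "(\<Sum>\<tau>\<in>?T. ?g (istar \<tau>)) \<le> (\<Sum>\<tau>\<in>?T. \<Sum>i\<in>\<tau>. ?g i)"
  proof (rule sum_mono)
    fix \<tau> assume "\<tau> \<in> ?T"
    hence "istar \<tau> \<in> \<tau>" using istar by auto
    thus "?g (istar \<tau>) \<le> (\<Sum>i\<in>\<tau>. ?g i)"
      by (intro member_le_sum) auto
  qed
  also have "(\<Sum>\<tau>\<in>?T. \<Sum>i\<in>\<tau>. ?g i) = (\<Sum>\<tau>\<in>?T. \<Sum>i\<in>UNIV. if i \<in> \<tau> then ?g i else 0)"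
    by (simp add: sum.If_cases)
  also have "\<dots> = (\<Sum>i\<in>UNIV. \<Sum>\<tau>\<in>?T. if i \<in> \<tau> then ?g i else 0)"
    by (rule sum.swap)
  also have "\<dots> = (\<Sum>i\<in>UNIV. ?g i * real ((CARD('m) - 1) choose (\<beta> - 1)))"
  proof (rule sum.cong[OF refl])
    fix i :: 'm
    have "(\<Sum>\<tau>\<in>?T. if i \<in> \<tau> then ?g i else 0) = (\<Sum>\<tau>\<in>{\<tau>\<in>?T. i \<in> \<tau>}. ?g i)"
      by (rule sum.inter_filter[symmetric]) simp
    also have "{\<tau>\<in>?T. i \<in> \<tau>} = {\<tau>::'m set. card \<tau> = \<beta> \<and> i \<in> \<tau>}" by auto
    also have "(\<Sum>\<tau>\<in>{\<tau>::'m set. card \<tau> = \<beta> \<and> i \<in> \<tau>}. ?g i) = ?g i * real (card {\<tau>::'m set. card \<tau> = \<beta> \<and> i \<in> \<tau>})" by simp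
    also have "\<dots> = ?g i * real ((CARD('m) - 1) choose (\<beta> - 1))"
      using count_containing[OF beta_ge, where 'm='m and i=i] by simp
    finally show "(\<Sum>\<tau>\<in>?T. if i \<in> \<tau> then ?g i else 0) = ?g i * real ((CARD('m) - 1) choose (\<beta> - 1))" .
  qed
  finally have S: "(\<Sum>\<tau>\<in>?T. ?g (istar \<tau>)) \<le> (\<Sum>i\<in>UNIV. ?g i) * real ((CARD('m) - 1) choose (\<beta> - 1))"
    by (simp add: sum_distrib_right)
  have bin: "real \<beta> * ?C = real CARD('m) * real ((CARD('m) - 1) choose (\<beta> - 1))"
    using times_binomial_minus1_eq[of \<beta> "CARD('m)"] beta_ge
    by (metis of_nat_mult less_le_trans zero_less_one)
  have "(1 / ?C) * (\<Sum>\<tau>\<in>?T. ?g (istar \<tau>)) \<le> (1 / ?C) * ((\<Sum>i\<in>UNIV. ?g i) * real ((CARD('m) - 1) choose (\<beta> - 1)))"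
    using S Cpos by (intro mult_left_mono) auto
  also have "\<dots> = (real \<beta> / real CARD('m)) * (\<Sum>i\<in>UNIV. ?g i)"
    using bin Cpos by (simp add: field_simps)
  finally have "v \<bullet> (subset_expectation \<beta> (\<lambda>\<tau>. outer_prod (A $ istar \<tau>)) *v v)
      \<le> v \<bullet> (((real \<beta> / real CARD('m)) *\<^sub>R (transpose A ** A)) *v v)"
    unfolding L quad_lin(2) quad_ata .
  thus "0 \<le> v \<bullet> ((((real \<beta> / real CARD('m)) *\<^sub>R (transpose A ** A)) -
          subset_expectation \<beta> (\<lambda>\<tau>. outer_prod (A $ istar \<tau>))) *v v)"
    unfolding quad_lin(1) by simp
qed

end
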